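(* Let $0<q<1$, let $X\ge 0$ have a distribution $P_X$ with $q$-density $f$ and finite $q$-moments of all orders, and let $m\in\mathbb{N}$. If there is a constant $C>0$ such that $$f(q^{-mj})\ge C\,q^{mj(j+1)/2}\quad\text{for all } j\ge 0,$$ then $P_X$ is $q$-moment indeterminate.
   Context: Fix $0<q<1$. All random variables are non-negative. The Jackson $q$-integral is $\int_0^a g(t)\,d_qt=a(1-q)\sum_{j=0}^\infty g(aq^j)q^j$ for $a>0$, and the improper $q$-integral is $\int_0^\infty g(t)\,d_qt=(1-q)\sum_{j=-\infty}^{\infty}g(q^j)q^j$. A function $f$ on $(0,\infty)$ is a $q$-density of $X$ (with distribution function $F_X$) if $F_X(x)=\int_0^x f(t)\,d_qt$ for all $x>0$. The $n$-th $q$-moment is $m_q(n;f)=m_q(n;X)=\int_0^\infty t^nf(t)\,d_qt=(1-q)\sum_{j\in\mathbb{Z}}q^{j(n+1)}f(q^j)$, $n\in\mathbb{N}_0$. For functions $f,g$ on $(0,\infty)$ write $f\sim g$ iff $f(q^j)=g(q^j)$ for all $j\in\mathbb{Z}$. A distribution $P_X$ with $q$-density $f$ and finite $q$-moments of all orders is $q$-moment determinate if, whenever $Y$ is a random variable with $q$-density $g$ and $m_q(k;Y)=m_q(k;X)$ for all $k\in\mathbb{N}_0$, one has $f\sim g$; otherwise it is $q$-moment indeterminate. *)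

theory Defs
  imports "HOL-Probability.Probability"
begin

text \<open>A nonnegative random variable is represented by its distribution: a probability
  measure on the Borel sets of the reals, concentrated on [0,\<infinity>).
  Its distribution function is \<open>x \<mapsto> measure M {..x}\<close>.\<close>

definition nonneg_distr :: "real measure \<Rightarrow> bool" where
  "nonneg_distr M \<longleftrightarrow> prob_space M \<and> sets M = sets borel \<and> (AE x in M. 0 \<le> x)"

definition jackson_int :: "real \<Rightarrow> real \<Rightarrow> (real \<Rightarrow> real) \<Rightarrow> real" where
  "jackson_int q a g = a * (1 - q) * (\<Sum>j. g (a * q ^ j) * q ^ j)"

definition q_density :: "real \<Rightarrow> real measure \<Rightarrow> (real \<Rightarrow> real) \<Rightarrow> bool" where
  "q_density q M f \<longleftrightarrow>
     (\<forall>x>0. summable (\<lambda>j. f (x * q ^ j) * q ^ j) \<and> measure M {..x} = jackson_int q x f)"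

definition q_moment_term :: "real \<Rightarrow> (real \<Rightarrow> real) \<Rightarrow> nat \<Rightarrow> int \<Rightarrow> real" where
  "q_moment_term q f n j = q powi (j * (int n + 1)) * f (q powi j)"

definition q_moment :: "real \<Rightarrow> (real \<Rightarrow> real) \<Rightarrow> nat \<Rightarrow> real" where
  "q_moment q f n = (1 - q) * infsum (q_moment_term q f n) UNIV"

definition finite_q_moments :: "real \<Rightarrow> (real \<Rightarrow> real) \<Rightarrow> bool" where
  "finite_q_moments q f \<longleftrightarrow> (\<forall>n. q_moment_term q f n summable_on UNIV)"

definition q_equiv :: "real \<Rightarrow> (real \<Rightarrow> real) \<Rightarrow> (real \<Rightarrow> real) \<Rightarrow> bool" where
  "q_equiv q f g \<longleftrightarrow> (\<forall>j::int. f (q powi j) = g (q powi j))"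

text \<open>q-moment determinacy of the distribution \<open>M\<close> with q-density \<open>f\<close>
  (finite q-moments being a standing hypothesis where used).\<close>
definition q_moment_determinate :: "real \<Rightarrow> real measure \<Rightarrow> (real \<Rightarrow> real) \<Rightarrow> bool" where
  "q_moment_determinate q M f \<longleftrightarrow>
     (\<forall>N g. nonneg_distr N \<and> q_density q N g \<and> finite_q_moments q g \<and>
            (\<forall>k. q_moment q g k = q_moment q f k) \<longrightarrow> q_equiv q f g)"

definition q_moment_indeterminate :: "real \<Rightarrow> real measure \<Rightarrow> (real \<Rightarrow> real) \<Rightarrow> bool" where
  "q_moment_indeterminate q M f \<longleftrightarrow> \<not> q_moment_determinate q M f"

end

theory Submission
  imports Defs
begin


fun hh :: "real \<Rightarrow> nat \<Rightarrow> real" where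
  "hh Q 0 = 1"
| "hh Q (Suc i) = - hh Q i * Q ^ i / (1 - Q ^ Suc i)"

lemma hh_abs:
  assumes "0 < Q" "Q < 1"
  shows "\<bar>hh Q i\<bar> = Q powr (real i * (real i - 1) / 2) * (\<Prod>n\<in>{1..i}. 1 / (1 - Q ^ n))"
proof (induction i)
  case 0 then show ?case using assms by simp
next
  case (Suc i)
  have q1: "Q ^ Suc i < 1" using assms by (rule power_Suc_less_one)
  have "\<bar>hh Q (Suc i)\<bar> = \<bar>hh Q i\<bar> * Q ^ i / (1 - Q ^ Suc i)"
    using assms q1 power_Suc_less_one[of Q i] by (simp add: abs_mult abs_divide)
  also have "\<dots> = Q powr (real i * (real i - 1) / 2) * Q powr (real i) * ((\<Prod>n\<in>{1..i}. 1 / (1 - Q ^ n)) * (1 / (1 - Q ^ Suc i)))"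
    using Suc assms by (simp add: powr_realpow)
  also have "Q powr (real i * (real i - 1) / 2) * Q powr (real i) = Q powr (real (Suc i) * (real (Suc i) - 1) / 2)"
  proof -
    have e: "real i * (real i - 1) / 2 + real i = real (Suc i) * (real (Suc i) - 1) / 2" by (simp add: field_simps)
    show ?thesis by (simp only: powr_add[symmetric] e)
  qed
  also have "(\<Prod>n\<in>{1..i}. 1 / (1 - Q ^ n)) * (1 / (1 - Q ^ Suc i)) = (\<Prod>n\<in>{1..Suc i}. 1 / (1 - Q ^ n))"
    by (simp add: prod.nat_ivl_Suc')
  finally show ?case .
qed

lemma prod_bound:
  fixes Q :: real
  assumes "0 < Q" "Q < 1"
  shows "(\<Prod>n\<in>{1..i}. 1 / (1 - Q ^ n)) \<le> exp (1 / (1 - Q)^2)"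
proof -
  have "(\<Prod>n\<in>{1..i}. 1 / (1 - Q ^ n)) \<le> (\<Prod>n\<in>{1..i}. exp (Q ^ n / (1 - Q)))"
  proof (rule Groups_Big.linordered_semidom_class.prod_mono)
    fix n :: nat assume n: "n \<in> {1..i}"
    have qn: "Q ^ n < 1" "Q ^ n \<le> Q" using assms n power_decreasing[of 1 n Q] power_less_one_iff[of Q n] by auto
    have "Q ^ n \<le> Q" using qn by simp
    have "0 \<le> 1 / (1 - Q ^ n)" using qn by simp
    have "1 / (1 - Q ^ n) = 1 + Q ^ n / (1 - Q ^ n)" using qn by (simp add: field_simps)
    also have "\<dots> \<le> exp (Q ^ n / (1 - Q ^ n))" by (rule exp_ge_add_one_self[simplified add.commute])
    also have "\<dots> \<le> exp (Q ^ n / (1 - Q))"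
      using qn assms by (intro exp_mono divide_left_mono) (auto intro: mult_pos_pos)
    finally show "0 \<le> 1 / (1 - Q ^ n) \<and> 1 / (1 - Q ^ n) \<le> exp (Q ^ n / (1 - Q))" using \<open>0 \<le> 1 / (1 - Q ^ n)\<close> by simp
  qed
  also have "\<dots> = exp (\<Sum>n\<in>{1..i}. Q ^ n / (1 - Q))" by (simp add: exp_sum)
  also have "\<dots> \<le> exp (1 / (1 - Q)^2)"
  proof -
    have "(\<Sum>n\<in>{1..i}. Q ^ n / (1 - Q)) = (\<Sum>n\<in>{1..i}. Q ^ n) / (1 - Q)" by (simp add: sum_divide_distrib)
    also have "(\<Sum>n\<in>{1..i}. Q ^ n) \<le> (\<Sum>n<Suc i. Q ^ n)"
      using assms by (intro sum_mono2) auto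
    also have "(\<Sum>n<Suc i. Q ^ n) = (1 - Q ^ Suc i) / (1 - Q)" using assms by (simp only: sum_gp_strict) simp
    also have "\<dots> \<le> 1 / (1 - Q)" using assms by (intro divide_right_mono) auto
    finally have "(\<Sum>n\<in>{1..i}. Q ^ n / (1 - Q)) \<le> 1 / (1 - Q)^2"
      using assms by (simp add: divide_right_mono power2_eq_square)
    then show ?thesis by simp
  qed
  finally show ?thesis .
qed

lemma hh_step_bound:
  assumes "0 < Q" "Q < 1"
  shows "\<bar>hh Q (Suc n)\<bar> \<le> \<bar>hh Q n\<bar> * (Q ^ n / (1 - Q))"
proof -
  have a: "Q ^ Suc n \<le> Q" using assms power_decreasing[of 1 "Suc n" Q] by auto
  have b: "Q ^ Suc n < 1" using assms by (rule power_Suc_less_one)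
  have "\<bar>hh Q (Suc n)\<bar> = \<bar>hh Q n\<bar> * (Q ^ n / (1 - Q ^ Suc n))"
    using assms b by (simp add: abs_mult abs_divide)
  also have "\<dots> \<le> \<bar>hh Q n\<bar> * (Q ^ n / (1 - Q))"
    using assms a b by (intro mult_left_mono divide_left_mono) (auto intro: mult_pos_pos)
  finally show ?thesis .
qed

lemma hh_summable:
  assumes "0 < Q" "Q < 1"
  shows "summable (\<lambda>i. norm (hh Q i * z ^ i))"
proof -
  have "(\<lambda>n. norm z * Q ^ n / (1 - Q)) \<longlonglongrightarrow> norm z * 0 / (1 - Q)"
    using assms by (intro tendsto_intros LIMSEQ_power_zero) auto
  then have "eventually (\<lambda>n. norm z * Q ^ n / (1 - Q) < 1/2) sequentially"
    by (intro order_tendstoD(2)) auto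
  then obtain N where N: "\<And>n. n \<ge> N \<Longrightarrow> norm z * Q ^ n / (1 - Q) < 1/2"
    by (auto simp: eventually_sequentially)
  show ?thesis
  proof (rule summable_ratio_test[of "1/2" N])
    fix n assume n: "n \<ge> N"
    have "norm (norm (hh Q (Suc n) * z ^ Suc n)) = \<bar>hh Q (Suc n)\<bar> * (norm z ^ n * norm z)"
      by (simp del: hh.simps add: norm_mult norm_power abs_mult power_abs)
    also have "\<dots> \<le> (\<bar>hh Q n\<bar> * (Q ^ n / (1 - Q))) * (norm z ^ n * norm z)"
      using hh_step_bound[OF assms] by (intro mult_right_mono) auto
    also have "\<dots> = (norm z * Q ^ n / (1 - Q)) * (\<bar>hh Q n\<bar> * norm z ^ n)" by simp
    also have "\<dots> \<le> 1/2 * (\<bar>hh Q n\<bar> * norm z ^ n)"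
      using N[OF n] by (intro mult_right_mono) auto
    also have "\<dots> = 1/2 * norm (norm (hh Q n * z ^ n))" by (simp del: hh.simps add: norm_mult norm_power abs_mult power_abs)
    finally show "norm (norm (hh Q (Suc n) * z ^ Suc n)) \<le> 1/2 * norm (norm (hh Q n * z ^ n))" .
  qed simp
qed

definition phi :: "real \<Rightarrow> real \<Rightarrow> real" where
  "phi Q z = (\<Sum>i. hh Q i * z ^ i)"

lemma hh_sums: "0 < Q \<Longrightarrow> Q < 1 \<Longrightarrow> (\<lambda>i. hh Q i * z ^ i) sums phi Q z"
  unfolding phi_def by (rule summable_sums, rule summable_norm_cancel, rule hh_summable)

lemma phi_funeq:
  assumes "0 < Q" "Q < 1"
  shows "phi Q z = (1 - z) * phi Q (Q * z)"
proof -
  define w where "w i = hh Q i * (1 - Q ^ i) * z ^ i" for i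
  have s1: "(\<lambda>i. hh Q i * z ^ i - hh Q i * (Q * z) ^ i) sums (phi Q z - phi Q (Q * z))"
    by (intro sums_diff hh_sums assms)
  have eqw: "hh Q i * z ^ i - hh Q i * (Q * z) ^ i = w i" for i
    unfolding w_def by (simp only: power_mult_distrib left_diff_distrib right_diff_distrib mult_1_right mult_1_left mult.assoc)
  have s2: "w sums (phi Q z - phi Q (Q * z))" using s1 by (simp only: eqw)
  have w0: "w 0 = 0" unfolding w_def by simp
  have s3: "(\<lambda>i. w (Suc i)) sums (phi Q z - phi Q (Q * z))"
    using sums_Suc_iff[of w "phi Q z - phi Q (Q * z)"] s2 w0 by simp
  have eqs: "w (Suc i) = (- z) * (hh Q i * (Q * z) ^ i)" for i
  proof -
    have ne: "1 - Q ^ Suc i \<noteq> 0" using power_Suc_less_one[OF assms, of i] by simp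
    have e: "hh Q (Suc i) * (1 - Q ^ Suc i) = - hh Q i * Q ^ i" using ne by simp
    have "w (Suc i) = (hh Q (Suc i) * (1 - Q ^ Suc i)) * z ^ Suc i" by (simp only: w_def)
    also have "\<dots> = (- hh Q i * Q ^ i) * (z ^ i * z)" by (subst e) (simp only: power_Suc2)
    also have "\<dots> = (- z) * (hh Q i * (Q * z) ^ i)" by (simp add: power_mult_distrib mult_ac del: hh.simps)
    finally show ?thesis .
  qed
  have s4: "(\<lambda>i. (- z) * (hh Q i * (Q * z) ^ i)) sums (phi Q z - phi Q (Q * z))" using s3 by (simp only: eqs)
  have s5: "(\<lambda>i. (- z) * (hh Q i * (Q * z) ^ i)) sums ((- z) * phi Q (Q * z))"
    by (intro sums_mult hh_sums assms)
  have h: "phi Q z - phi Q (Q * z) = (- z) * phi Q (Q * z)" using s4 s5 by (rule sums_unique2)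
  have "(1 - z) * phi Q (Q*z) = phi Q (Q*z) - z * phi Q (Q*z)" by (simp only: left_diff_distrib mult_1_left)
  then show ?thesis using h unfolding minus_mult_left by linarith
qed

lemma phi_zero:
  assumes "0 < Q" "Q < 1"
  shows "phi Q (inverse Q ^ k) = 0"
proof (induction k)
  case 0 then show ?case using phi_funeq[OF assms, of 1] by (simp only: power_0 diff_self mult_zero_left)
next
  case (Suc k)
  have "phi Q (inverse Q ^ Suc k) = (1 - inverse Q ^ Suc k) * phi Q (Q * inverse Q ^ Suc k)"
    by (rule phi_funeq[OF assms])
  also have "Q * inverse Q ^ Suc k = inverse Q ^ k"
  proof -
    have "Q * inverse Q ^ Suc k = (Q * inverse Q) * inverse Q ^ k" by (simp only: power_Suc mult.assoc)
    also have "Q * inverse Q = 1" using assms by (intro right_inverse) simp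
    finally show ?thesis by simp
  qed
  finally show ?case using Suc by simp
qed



lemma cdf_lim0:
  fixes q x :: real
  assumes P: "prob_space N" "sets N = sets borel" and q: "0 < q" "q < 1" and x: "x > 0"
  shows "(\<lambda>n. measure N {..x * q ^ n}) \<longlonglongrightarrow> measure N {..0}"
proof -
  interpret prob_space N by (rule P)
  have inter: "(\<Inter>n. {..x * q ^ n}) = {..0::real}"
  proof (intro equalityI subsetI)
    fix y assume y: "y \<in> (\<Inter>n. {..x * q ^ n})"
    show "y \<in> {..0}"
    proof (rule ccontr)
      assume "y \<notin> {..0}" then have "y > 0" by simp
      have "(\<lambda>n. x * q ^ n) \<longlonglongrightarrow> x * 0" using q by (intro tendsto_intros LIMSEQ_power_zero) auto
      then have "eventually (\<lambda>n. x * q ^ n < y) sequentially" using \<open>y > 0\<close> by (intro order_tendstoD(2)) auto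
      then obtain n where "x * q ^ n < y" by (auto simp: eventually_sequentially)
      moreover have "y \<le> x * q ^ n" using y by blast
      ultimately show False by linarith
    qed
  next
    fix y :: real assume "y \<in> {..0}"
    then have y0: "y \<le> 0" by simp
    have "y \<le> x * q ^ n" for n
    proof -
      have "0 \<le> x * q ^ n" using x q by simp
      then show ?thesis using y0 by linarith
    qed
    then show "y \<in> (\<Inter>n. {..x * q ^ n})" by blast
  qed
  have "(\<lambda>n. measure N {..x * q ^ n}) \<longlonglongrightarrow> measure N (\<Inter>n. {..x * q ^ n})"
  proof (rule finite_Lim_measure_decseq)
    show "range (\<lambda>n. {..x * q ^ n}) \<subseteq> sets N" unfolding P(2) by (intro image_subsetI atMost_borel)
    show "decseq (\<lambda>n. {..x * q ^ n})"
      unfolding decseq_def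
    proof (intro allI impI subsetI)
      fix m n :: nat and y assume mn: "m \<le> n" and y: "y \<in> {..x * q ^ n}"
      have "q ^ n \<le> q ^ m" using power_decreasing[OF mn, of q] q by simp
      then have "x * q ^ n \<le> x * q ^ m" using x by (intro mult_left_mono) auto
      then show "y \<in> {..x * q ^ m}" using y by simp
    qed
  qed
  then show ?thesis by (simp only: inter)
qed

lemma cdf_lim1:
  fixes q :: real
  assumes P: "prob_space N" "sets N = sets borel" and q: "0 < q" "q < 1"
  shows "(\<lambda>n. measure N {..inverse q ^ n}) \<longlonglongrightarrow> 1"
proof -
  interpret prob_space N by (rule P)
  have un: "(\<Union>n. {..inverse q ^ n}) = (UNIV :: real set)"
  proof (intro equalityI subsetI)
    fix y :: real
    have "1 < inverse q" using q by (simp add: one_less_inverse)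
    then obtain n where "y < inverse q ^ n" using real_arch_pow by blast
    then show "y \<in> (\<Union>n. {..inverse q ^ n})" by (blast intro: less_imp_le)
  qed auto
  have "(\<lambda>n. measure N {..inverse q ^ n}) \<longlonglongrightarrow> measure N (\<Union>n. {..inverse q ^ n})"
  proof (rule finite_Lim_measure_incseq)
    show "range (\<lambda>n. {..inverse q ^ n}) \<subseteq> sets N" unfolding P(2) by (intro image_subsetI atMost_borel)
    have "1 \<le> inverse q" using q by (simp add: one_le_inverse)
    then show "incseq (\<lambda>n. {..inverse q ^ n})"
      unfolding incseq_def
    proof (intro allI impI subsetI)
      fix m n :: nat and y assume mn: "m \<le> n" and y: "y \<in> {..inverse q ^ m}"
      have "inverse q ^ m \<le> inverse q ^ n" using power_increasing[OF mn \<open>1 \<le> inverse q\<close>] .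
      then show "y \<in> {..inverse q ^ n}" using y by simp
    qed
  qed
  moreover have "space N = UNIV" using P(2) sets_eq_imp_space_eq by fastforce
  ultimately show ?thesis using un prob_space by simp
qed

lemma density_step:
  assumes d: "q_density q M f" and q: "0 < q" "q < 1" and x: "x > 0"
  shows "measure M {..x} = x * (1 - q) * f x + measure M {..q * x}"
proof -
  have qx: "q * x > 0" using q x by simp
  have s1: "summable (\<lambda>j. f (x * q ^ j) * q ^ j)" and m1: "measure M {..x} = jackson_int q x f"
    using d x unfolding q_density_def by auto
  have s2: "summable (\<lambda>j. f (q * x * q ^ j) * q ^ j)" and m2: "measure M {..q * x} = jackson_int q (q * x) f"
    using d qx unfolding q_density_def by auto
  have eq: "(\<lambda>j. f (x * q ^ Suc j) * q ^ Suc j) = (\<lambda>j. q * (f (q * x * q ^ j) * q ^ j))"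
    by (simp add: mult_ac)
  have "(\<Sum>j. f (x * q ^ j) * q ^ j) = f x + (\<Sum>j. f (x * q ^ Suc j) * q ^ Suc j)"
    using suminf_split_head[OF s1] by simp
  also have "(\<Sum>j. f (x * q ^ Suc j) * q ^ Suc j) = q * (\<Sum>j. f (q * x * q ^ j) * q ^ j)"
    unfolding eq by (rule suminf_mult[OF s2])
  finally have "(\<Sum>j. f (x * q ^ j) * q ^ j) = f x + q * (\<Sum>j. f (q * x * q ^ j) * q ^ j)" .
  then show ?thesis unfolding m1 m2 jackson_int_def by (simp add: algebra_simps)
qed

lemma cdf_zero:
  assumes P: "prob_space M" "sets M = sets borel" and d: "q_density q M f" and q: "0 < q" "q < 1"
  shows "measure M {..0} = 0"
proof -
  define F where "F n = measure M {..q ^ n}" for n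
  have lim: "F \<longlonglongrightarrow> measure M {..0}"
    using cdf_lim0[OF P q, of 1] unfolding F_def by simp
  have t: "(\<lambda>n. F n - F (Suc n)) sums (F 0 - measure M {..0})"
    by (rule telescope_sums'[OF lim])
  have step: "F n - F (Suc n) = (1 - q) * (f (1 * q ^ n) * q ^ n)" for n
    using density_step[OF d q, of "q ^ n"] q unfolding F_def by (simp add: mult_ac)
  have s1: "summable (\<lambda>j. f (1 * q ^ j) * q ^ j)" and m1: "measure M {..1} = jackson_int q 1 f"
    using d unfolding q_density_def by (metis zero_less_one)+
  have "(\<lambda>n. (1 - q) * (f (1 * q ^ n) * q ^ n)) sums ((1 - q) * (\<Sum>j. f (1 * q ^ j) * q ^ j))"
    by (intro sums_mult summable_sums s1)
  then have "(\<lambda>n. F n - F (Suc n)) sums (F 0)"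
    unfolding step using m1 unfolding jackson_int_def F_def by simp
  with t have "F 0 - measure M {..0} = F 0" by (rule sums_unique2)
  then show ?thesis by simp
qed

lemma qdens_N:
  assumes P: "prob_space N" "sets N = sets borel" and z: "measure N {..0} = 0" and q: "0 < q" "q < 1"
  shows "q_density q N (\<lambda>t. (measure N {..t} - measure N {..q * t}) / (t * (1 - q)))"
  unfolding q_density_def
proof (intro allI impI)
  fix x :: real assume x: "x > 0"
  define G where "G n = measure N {..x * q ^ n}" for n
  have lim: "G \<longlonglongrightarrow> 0" using cdf_lim0[OF P q x] z unfolding G_def by simp
  have t: "(\<lambda>n. (G n - G (Suc n)) / (x * (1 - q))) sums ((G 0 - 0) / (x * (1 - q)))"
    by (intro sums_divide telescope_sums'[OF lim])
  have eq: "(measure N {..x * q ^ n} - measure N {..q * (x * q ^ n)}) / (x * q ^ n * (1 - q)) * q ^ n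
        = (G n - G (Suc n)) / (x * (1 - q))" for n
    using q x unfolding G_def by (simp add: mult_ac)
  have t2: "(\<lambda>n. (measure N {..x * q ^ n} - measure N {..q * (x * q ^ n)}) / (x * q ^ n * (1 - q)) * q ^ n)
      sums (measure N {..x} / (x * (1 - q)))"
    using t unfolding eq G_def by simp
  then show "summable (\<lambda>j. (measure N {..x * q ^ j} - measure N {..q * (x * q ^ j)}) / (x * q ^ j * (1 - q)) * q ^ j) \<and>
        measure N {..x} = jackson_int q x (\<lambda>t. (measure N {..t} - measure N {..q * t}) / (t * (1 - q)))"
    unfolding jackson_int_def using q x by (simp add: sums_iff)
qed

lemma int_has_sum:
  fixes u :: "int \<Rightarrow> real"
  assumes nn: "\<And>j. u j \<ge> 0" and s1: "(\<lambda>n. u (int n)) sums s1" and s2: "(\<lambda>n. u (- int n - 1)) sums s2"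
  shows "(u has_sum (s1 + s2)) UNIV"
proof -
  have h1: "((\<lambda>n. u (int n)) has_sum s1) UNIV" by (rule sums_nonneg_imp_has_sum[OF s1 nn])
  have h2: "((\<lambda>n. u (- int n - 1)) has_sum s2) UNIV" by (rule sums_nonneg_imp_has_sum[OF s2 nn])
  have i1: "inj_on int UNIV" by (simp add: inj_on_def)
  have i2: "inj_on (\<lambda>n::nat. - int n - 1) UNIV" by (simp add: inj_on_def)
  have H1: "(u has_sum s1) (range int)"
    using has_sum_reindex[OF i1, of u s1] h1 by (simp add: o_def)
  have H2: "(u has_sum s2) (range (\<lambda>n::nat. - int n - 1))"
    using has_sum_reindex[OF i2, of u s2] h2 by (simp add: o_def)
  have disj: "range int \<inter> range (\<lambda>n::nat. - int n - 1) = {}" by auto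
  have un: "range int \<union> range (\<lambda>n::nat. - int n - 1) = UNIV"
  proof (intro equalityI subsetI)
    fix j :: int assume "j \<in> UNIV"
    show "j \<in> range int \<union> range (\<lambda>n::nat. - int n - 1)"
    proof (cases "j \<ge> 0")
      case True then have "j = int (nat j)" by simp
      then show ?thesis by blast
    next
      case False then have "j = - int (nat (- j - 1)) - 1" by simp
      then show ?thesis by blast
    qed
  qed auto
  show ?thesis using has_sum_Un_disjoint[OF H1 H2 disj] unfolding un .
qed

lemma sum_a:
  fixes q :: real
  assumes P: "prob_space M" "sets M = sets borel" and z: "measure M {..0} = 0" and q: "0 < q" "q < 1"
  shows "((\<lambda>j::int. measure M {..q powi j} - measure M {..q powi (j + 1)}) has_sum 1) UNIV"
proof -
  interpret prob_space M by (rule P)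
  have nn: "measure M {..q powi j} - measure M {..q powi (j + 1)} \<ge> 0" for j
  proof -
    have "q powi (j + 1) \<le> q powi j" using q by (intro power_int_decreasing) auto
    then have "{..q powi (j + 1)} \<subseteq> {..q powi j}" by auto
    then have "measure M {..q powi (j + 1)} \<le> measure M {..q powi j}"
      by (rule finite_measure_mono) (simp add: P(2))
    then show ?thesis by simp
  qed
  define F where "F n = measure M {..q ^ n}" for n
  define H where "H n = measure M {..inverse q ^ n}" for n
  have limF: "F \<longlonglongrightarrow> 0" using cdf_lim0[OF P q, of 1] z unfolding F_def by simp
  have limH: "H \<longlonglongrightarrow> 1" using cdf_lim1[OF P q] unfolding H_def .
  have e1: "measure M {..q powi int n} - measure M {..q powi (int n + 1)} = F n - F (Suc n)" for n
  proof -
    have "q powi (int n + 1) = q ^ Suc n" by (metis of_nat_Suc power_int_of_nat add.commute)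
    then show ?thesis unfolding F_def by simp
  qed
  have e2: "measure M {..q powi (- int n - 1)} - measure M {..q powi (- int n - 1 + 1)} = H (Suc n) - H n" for n
  proof -
    have a: "q powi (- int n - 1) = inverse q ^ Suc n"
      by (metis minus_diff_eq diff_minus_eq_add of_nat_Suc power_int_minus power_int_of_nat power_inverse add.commute uminus_add_conv_diff)
    have b: "q powi (- int n - 1 + 1) = inverse q ^ n"
      by (simp add: power_int_minus power_inverse)
    show ?thesis unfolding a b H_def ..
  qed
  have s1: "(\<lambda>n. measure M {..q powi int n} - measure M {..q powi (int n + 1)}) sums (F 0 - 0)"
    unfolding e1 by (rule telescope_sums'[OF limF])
  have s2: "(\<lambda>n. measure M {..q powi (- int n - 1)} - measure M {..q powi (- int n - 1 + 1)}) sums (1 - H 0)"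
    unfolding e2 by (rule telescope_sums[OF limH])
  have "F 0 - 0 + (1 - H 0) = 1" unfolding F_def H_def by simp
  then show ?thesis using int_has_sum[OF nn s1 s2] by simp
qed



lemma powi_le_iff:
  fixes q :: real
  assumes q: "0 < q" "q < 1"
  shows "q powi i \<le> q powi j \<longleftrightarrow> j \<le> i"
proof
  assume "q powi i \<le> q powi j"
  then show "j \<le> i" using power_int_strict_decreasing[of i j q] q by (cases "i < j") auto
next
  assume "j \<le> i" then show "q powi i \<le> q powi j" using q by (intro power_int_decreasing) auto
qed

lemma pmf_from_has_sum:
  fixes b :: "int \<Rightarrow> real"
  assumes nn: "\<And>j. b j \<ge> 0" and hs: "(b has_sum 1) UNIV"
  shows "(\<integral>\<^sup>+x. ennreal (b x) \<partial>count_space UNIV) = 1"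
proof -
  have "b summable_on UNIV" using hs by (rule has_sum_imp_summable)
  then have "Infinite_Sum.abs_summable_on b UNIV" using summable_on_iff_abs_summable_on_real by blast
  then have ab: "Infinite_Set_Sum.abs_summable_on b UNIV" using abs_summable_equivalent by blast
  have "(\<integral>\<^sup>+x. ennreal (b x) \<partial>count_space UNIV) = ennreal (infsetsum b UNIV)"
    using nn_integral_conv_infsetsum[OF ab] nn by simp
  also have "infsetsum b UNIV = infsum b UNIV" by (rule infsetsum_infsum[OF ab])
  also have "infsum b UNIV = 1" using hs by (rule infsumI)
  finally show ?thesis by simp
qed

lemma pmf_N:
  fixes b :: "int \<Rightarrow> real" and q :: real
  assumes nn: "\<And>j. b j \<ge> 0" and hs: "(b has_sum 1) UNIV" and q: "0 < q" "q < 1"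
  defines "N \<equiv> distr (measure_pmf (embed_pmf b)) borel (\<lambda>j. q powi j)"
  shows "nonneg_distr N" "measure N {..0} = 0"
    "\<And>j. measure N {..q powi j} - measure N {..q powi (j + 1)} = b j"
proof -
  define P where "P = embed_pmf b"
  have pm: "pmf P j = b j" for j
    unfolding P_def by (rule pmf_embed_pmf[OF nn pmf_from_has_sum[OF nn hs]])
  have meas: "(\<lambda>j. q powi j) \<in> measurable (measure_pmf P) borel" by simp
  have NP: "N = distr (measure_pmf P) borel (\<lambda>j. q powi j)" unfolding N_def P_def ..
  have ps: "prob_space N" unfolding NP by (rule measure_pmf.prob_space_distr[OF meas])
  have sN: "sets N = sets borel" unfolding NP by simp
  have ae: "AE x in N. 0 \<le> x"
  proof -
    have "{x \<in> space borel. 0 \<le> (x::real)} \<in> sets borel" by simp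
    then have "(AE x in N. 0 \<le> x) \<longleftrightarrow> (AE j in measure_pmf P. 0 \<le> q powi j)"
      unfolding NP by (intro AE_distr_iff meas)
    moreover have "AE j in measure_pmf P. 0 \<le> q powi j" using q by (intro AE_I2) simp
    ultimately show ?thesis by simp
  qed
  show "nonneg_distr N" unfolding nonneg_distr_def using ps sN ae by blast
  have mN: "measure N {..t} = measure (measure_pmf P) {j. q powi j \<le> t}" for t
    unfolding NP by (subst measure_distr[OF meas]) (auto simp: vimage_def)
  show "measure N {..0} = 0"
  proof -
    have "{j. q powi j \<le> 0} = {}" using q by (auto simp: not_le)
    then show ?thesis unfolding mN by simp
  qed
  fix j :: int
  have A: "{i. q powi i \<le> q powi j} = {j..}" using powi_le_iff[OF q] by auto
  have B: "{i. q powi i \<le> q powi (j + 1)} = {j+1..}" using powi_le_iff[OF q] by auto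
  have "measure (measure_pmf P) {j..} - measure (measure_pmf P) {j+1..} = measure (measure_pmf P) ({j..} - {j+1..})"
    by (rule measure_pmf.finite_measure_Diff[symmetric]) auto
  also have "{j..} - {j+1..} = {j}" by auto
  finally show "measure N {..q powi j} - measure N {..q powi (j + 1)} = b j"
    unfolding mN A B measure_pmf_single pm .
qed



lemma a_nonneg:
  fixes q :: real
  assumes P: "prob_space M" "sets M = sets borel" and q: "0 < q" "q < 1"
  shows "measure M {..q powi j} - measure M {..q powi (j + 1)} \<ge> 0"
proof -
  interpret prob_space M by (rule P)
  have "q powi (j + 1) \<le> q powi j" using q by (intro power_int_decreasing) auto
  then have "{..q powi (j + 1)} \<subseteq> {..q powi j}" by auto
  then have "measure M {..q powi (j + 1)} \<le> measure M {..q powi j}"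
    by (rule finite_measure_mono) (simp add: P(2))
  then show ?thesis by simp
qed

lemma c_moments:
  fixes q Q :: real and m k :: nat
  assumes q: "0 < q" "q < 1" and m: "m \<ge> 1" and Qd: "Q = q ^ m"
    and c_def: "\<And>j. c j = (if j \<le> 0 \<and> m dvd nat (-j) then hh Q (nat (-j) div m) else 0)"
  shows "((\<lambda>j. q powi (j * int k) * c j) has_sum 0) UNIV"
proof -
  have "q ^ Suc (m - 1) < 1" by (rule power_Suc_less_one[OF q])
  then have Q: "0 < Q" "Q < 1" using q m unfolding Qd by auto
  define z where "z = inverse Q ^ k"
  have hs0: "(\<lambda>i. hh Q i * z ^ i) sums 0"
    using hh_sums[OF Q, of z] phi_zero[OF Q, of k] unfolding z_def by simp
  have hs: "((\<lambda>i. hh Q i * z ^ i) has_sum 0) UNIV"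
    by (rule norm_summable_imp_has_sum[OF hh_summable[OF Q] hs0])
  define r where "r i = - int (m * i)" for i
  have inj: "inj_on r UNIV" using m unfolding r_def by (auto simp: inj_on_def)
  have cr: "c (r i) = hh Q i" for i
  proof -
    have "nat (- (- int (m * i))) = m * i" by (simp only: minus_minus nat_int)
    then show ?thesis using m unfolding c_def r_def by (simp del: of_nat_mult)
  qed
  have eq: "((\<lambda>j. q powi (j * int k) * c j) \<circ> r) = (\<lambda>i. hh Q i * z ^ i)"
  proof
    fix i
    have ri: "r i * int k = - int (m * i * k)" unfolding r_def by simp
    have "q powi (r i * int k) = q powi (- int (m * i * k))" by (simp only: ri)
    also have "\<dots> = inverse (q ^ (m * i * k))" by (simp only: power_int_minus power_int_of_nat)
    also have "\<dots> = z ^ i" unfolding z_def Qd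
      by (simp add: power_mult[symmetric] power_inverse mult_ac)
    finally show "((\<lambda>j. q powi (j * int k) * c j) \<circ> r) i = hh Q i * z ^ i"
      by (simp add: cr)
  qed
  have "((\<lambda>j. q powi (j * int k) * c j) has_sum 0) (range r)"
    using has_sum_reindex[OF inj, of "\<lambda>j. q powi (j * int k) * c j" 0] hs unfolding eq by simp
  moreover have "c j = 0" if "j \<notin> range r" for j
  proof (rule ccontr)
    assume "c j \<noteq> 0"
    then have j: "j \<le> 0" "m dvd nat (-j)" unfolding c_def by (auto split: if_splits)
    then obtain i where "nat (-j) = m * i" by (auto simp: dvd_def)
    then have "j = r i" using j unfolding r_def by linarith
    then show False using that by auto
  qed
  ultimately show ?thesis
    by (subst (asm) has_sum_cong_neutral[where T = UNIV and g = "\<lambda>j. q powi (j * int k) * c j"]) auto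
qed

lemma hh_bound:
  fixes q :: real
  assumes q: "0 < q" "q < 1" and m: "m \<ge> 1"
  shows "\<bar>hh (q ^ m) i\<bar> \<le> exp (1 / (1 - q ^ m)^2) * q powr (real m * (real i * (real i - 1) / 2))"
proof -
  have "q ^ Suc (m - 1) < 1" by (rule power_Suc_less_one[OF q])
  then have Q: "0 < q ^ m" "q ^ m < 1" using q m by auto
  have e: "(q ^ m) powr (real i * (real i - 1) / 2) = q powr (real m * (real i * (real i - 1) / 2))"
    using q by (simp add: powr_realpow[symmetric] powr_powr)
  have "\<bar>hh (q ^ m) i\<bar> = (q ^ m) powr (real i * (real i - 1) / 2) * (\<Prod>n\<in>{1..i}. 1 / (1 - (q ^ m) ^ n))"
    by (rule hh_abs[OF Q])
  also have "\<dots> \<le> (q ^ m) powr (real i * (real i - 1) / 2) * exp (1 / (1 - q ^ m)^2)"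
    by (intro mult_left_mono prod_bound Q) simp
  finally show ?thesis unfolding e by (simp add: mult_ac)
qed

theorem theorem3:
  fixes q C :: real and M :: "real measure" and f :: "real \<Rightarrow> real" and m :: nat
  assumes "0 < q" and "q < 1"
    and "nonneg_distr M"
    and "q_density q M f"
    and "finite_q_moments q f"
    and "m \<ge> 1"
    and "C > 0"
    and "\<And>j::nat. f (q powi (- int (m * j))) \<ge> C * q powr (real (m * j * (j + 1)) / 2)"
  shows "q_moment_indeterminate q M f"
proof -
  note q = assms(1,2)
  have P: "prob_space M" "sets M = sets borel" using assms(3) unfolding nonneg_distr_def by auto
  define Q where "Q = q ^ m"
  have "q ^ Suc (m - 1) < 1" by (rule power_Suc_less_one[OF q])
  then have Q: "0 < Q" "Q < 1" using q assms(6) unfolding Q_def by auto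
  define K where "K = exp (1 / (1 - Q)^2)"
  have K: "K > 0" unfolding K_def by simp
  define eps where "eps = (1 - q) * C / K"
  have eps: "eps > 0" unfolding eps_def using q assms(7) K by simp
  define c where "c j = (if j \<le> 0 \<and> m dvd nat (-j) then hh Q (nat (-j) div m) else 0)" for j :: int
  define a where "a j = measure M {..q powi j} - measure M {..q powi (j + 1)}" for j :: int
  have z0: "measure M {..0} = 0" by (rule cdf_zero[OF P assms(4) q])
  have ha: "(a has_sum 1) UNIV" unfolding a_def by (rule sum_a[OF P z0 q])
  have ann: "a j \<ge> 0" for j unfolding a_def by (rule a_nonneg[OF P q])
  have pj: "q * q powi j = q powi (j + 1)" for j using q by (simp add: power_int_add_1')
  have aeq: "a j = (1 - q) * q powi j * f (q powi j)" for j
    using density_step[OF assms(4) q, of "q powi j"] q unfolding a_def pj by (simp add: mult_ac)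
  have hc: "((\<lambda>j. q powi (j * int k) * c j) has_sum 0) UNIV" for k
    by (rule c_moments[OF q assms(6) Q_def]) (simp add: c_def)
  have cr: "c (- int (m * i)) = hh Q i" for i
  proof -
    have "nat (- (- int (m * i))) = m * i" by (simp only: minus_minus nat_int)
    then show ?thesis using assms(6) unfolding c_def by (simp del: of_nat_mult)
  qed
  have alow: "a (- int (m * i)) \<ge> (1 - q) * C * q powr (real m * (real i * (real i - 1) / 2))" for i
  proof -
    have p1: "q powi (- int (m * i)) = q powr (- real (m * i))"
    proof -
      have "q powi (- int (m * i)) = inverse (q ^ (m * i))" by (simp only: power_int_minus power_int_of_nat)
      also have "\<dots> = inverse (q powr real (m * i))" using q by (simp only: powr_realpow)
      also have "\<dots> = q powr (- real (m * i))" by (simp only: powr_minus)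
      finally show ?thesis .
    qed
    have "(1 - q) * C * q powr (real m * (real i * (real i - 1) / 2))
        = (1 - q) * q powr (- real (m * i)) * (C * q powr (real (m * i * (i + 1)) / 2))"
    proof -
      have e: "real m * (real i * (real i - 1) / 2) = - real (m * i) + real (m * i * (i + 1)) / 2"
        by (simp add: field_simps)
      have pp: "q powr (real m * (real i * (real i - 1) / 2)) = q powr (- real (m * i)) * q powr (real (m * i * (i + 1)) / 2)"
        by (simp only: e powr_add)
      show ?thesis by (simp only: pp mult_ac)
    qed
    also have "\<dots> \<le> (1 - q) * q powr (- real (m * i)) * f (q powi (- int (m * i)))"
      using q by (intro mult_left_mono assms(8)) auto
    also have "\<dots> = a (- int (m * i))" unfolding aeq p1 by simp
    finally show ?thesis .
  qed
  define b where "b j = a j + eps * c j" for j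
  have bnn: "b j \<ge> 0" for j
  proof (cases "c j = 0")
    case True then show ?thesis using ann[of j] unfolding b_def by simp
  next
    case False
    then have j: "j \<le> 0" "m dvd nat (-j)" unfolding c_def by (auto split: if_splits)
    then obtain i where i: "nat (-j) = m * i" by (auto simp: dvd_def)
    then have ji: "j = - int (m * i)" using j by linarith
    have "\<bar>c j\<bar> \<le> K * q powr (real m * (real i * (real i - 1) / 2))"
      unfolding ji cr K_def Q_def by (rule hh_bound[OF q assms(6)])
    then have "eps * \<bar>c j\<bar> \<le> eps * (K * q powr (real m * (real i * (real i - 1) / 2)))"
      using eps by (intro mult_left_mono) auto
    also have "\<dots> = (1 - q) * C * q powr (real m * (real i * (real i - 1) / 2))"
      unfolding eps_def using K by simp
    also have "\<dots> \<le> a j" unfolding ji by (rule alow)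
    finally have "eps * \<bar>c j\<bar> \<le> a j" .
    moreover have "- (eps * \<bar>c j\<bar>) \<le> eps * c j" using eps by (simp add: abs_if)
    ultimately show ?thesis unfolding b_def by linarith
  qed
  have hb: "(b has_sum 1) UNIV"
  proof -
    have "((\<lambda>j. eps * c j) has_sum (eps * 0)) UNIV"
      using has_sum_cmult_right[OF hc[of 0]] by simp
    from has_sum_add[OF ha this] show ?thesis unfolding b_def by simp
  qed
  define N where "N = distr (measure_pmf (embed_pmf b)) borel (\<lambda>j. q powi j)"
  have N1: "nonneg_distr N" and N2: "measure N {..0} = 0"
    and N3: "\<And>j. measure N {..q powi j} - measure N {..q powi (j + 1)} = b j"
    using pmf_N[OF bnn hb q] unfolding N_def by auto
  have PN: "prob_space N" "sets N = sets borel" using N1 unfolding nonneg_distr_def by auto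
  define g where "g t = (measure N {..t} - measure N {..q * t}) / (t * (1 - q))" for t
  have gd: "q_density q N g" unfolding g_def[abs_def] by (rule qdens_N[OF PN N2 q])
  have glat: "g (q powi j) = b j / (q powi j * (1 - q))" for j
    unfolding g_def pj N3 ..
  have flat: "f (q powi j) = a j / (q powi j * (1 - q))" for j
    using q unfolding aeq by simp
  have pk: "q powi (j * (int k + 1)) = q powi (j * int k) * q powi j" for j k
    using q by (simp add: distrib_left power_int_add)
  have mom: "q_moment q g k = q_moment q f k" for k
  proof -
    define qa where "qa j = q powi (j * int k) * a j" for j
    have tf: "q_moment_term q f k j = (1 / (1 - q)) * qa j" for j
      unfolding q_moment_term_def flat pk qa_def using q by simp
    have tg: "q_moment_term q g k j = (1 / (1 - q)) * (qa j + eps * (q powi (j * int k) * c j))" for j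
    proof -
      have xnz: "q powi j \<noteq> 0" "1 - q \<noteq> 0" using q by auto
      show ?thesis unfolding q_moment_term_def glat pk qa_def b_def using xnz by (simp add: field_simps)
    qed
    have "q_moment_term q f k summable_on UNIV" using assms(5) unfolding finite_q_moments_def by blast
    then have "(\<lambda>j. (1 - q) * q_moment_term q f k j) summable_on UNIV" by (rule summable_on_cmult_right)
    moreover have "(\<lambda>j. (1 - q) * q_moment_term q f k j) = qa" unfolding tf using q by auto
    ultimately have "qa summable_on UNIV" by simp
    then have hqa: "(qa has_sum infsum qa UNIV) UNIV" by (rule has_sum_infsum)
    have "(q_moment_term q f k has_sum ((1 / (1 - q)) * infsum qa UNIV)) UNIV"
      unfolding tf by (rule has_sum_cmult_right[OF hqa])
    then have mf: "q_moment q f k = infsum qa UNIV" unfolding q_moment_def using q by (simp add: infsumI)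
    have "((\<lambda>j. eps * (q powi (j * int k) * c j)) has_sum (eps * 0)) UNIV"
      by (rule has_sum_cmult_right[OF hc])
    from has_sum_add[OF hqa this]
    have "((\<lambda>j. qa j + eps * (q powi (j * int k) * c j)) has_sum infsum qa UNIV) UNIV" by simp
    then have "(q_moment_term q g k has_sum ((1 / (1 - q)) * infsum qa UNIV)) UNIV"
      unfolding tg by (rule has_sum_cmult_right)
    then have mg: "q_moment q g k = infsum qa UNIV" unfolding q_moment_def using q by (simp add: infsumI)
    show ?thesis using mf mg by simp
  qed
  have fm: "finite_q_moments q g"
    unfolding finite_q_moments_def
  proof
    fix k
    define qa where "qa j = q powi (j * int k) * a j" for j
    have tf: "q_moment_term q f k j = (1 / (1 - q)) * qa j" for j
      unfolding q_moment_term_def flat pk qa_def using q by simp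
    have tg: "q_moment_term q g k j = (1 / (1 - q)) * (qa j + eps * (q powi (j * int k) * c j))" for j
    proof -
      have xnz: "q powi j \<noteq> 0" "1 - q \<noteq> 0" using q by auto
      show ?thesis unfolding q_moment_term_def glat pk qa_def b_def using xnz by (simp add: field_simps)
    qed
    have "q_moment_term q f k summable_on UNIV" using assms(5) unfolding finite_q_moments_def by blast
    then have "(\<lambda>j. (1 - q) * q_moment_term q f k j) summable_on UNIV" by (rule summable_on_cmult_right)
    moreover have "(\<lambda>j. (1 - q) * q_moment_term q f k j) = qa" unfolding tf using q by auto
    ultimately have "qa summable_on UNIV" by simp
    then have hqa: "(qa has_sum infsum qa UNIV) UNIV" by (rule has_sum_infsum)
    have "((\<lambda>j. eps * (q powi (j * int k) * c j)) has_sum (eps * 0)) UNIV"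
      by (rule has_sum_cmult_right[OF hc])
    from has_sum_add[OF hqa this]
    have "((\<lambda>j. qa j + eps * (q powi (j * int k) * c j)) has_sum infsum qa UNIV) UNIV" by simp
    then have "(q_moment_term q g k has_sum ((1 / (1 - q)) * infsum qa UNIV)) UNIV"
      unfolding tg by (rule has_sum_cmult_right)
    then show "q_moment_term q g k summable_on UNIV" by (rule has_sum_imp_summable)
  qed
  have neq: "\<not> q_equiv q f g"
  proof
    assume "q_equiv q f g"
    then have "f (q powi 0) = g (q powi 0)" unfolding q_equiv_def by blast
    then have "a 0 / (1 - q) = b 0 / (1 - q)" unfolding flat glat by simp
    then have "a 0 = b 0" using q by simp
    moreover have "c 0 = 1" using cr[of 0] by simp
    ultimately show False using eps unfolding b_def by simp
  qed
  show ?thesis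
    unfolding q_moment_indeterminate_def q_moment_determinate_def
    using N1 gd fm mom neq by metis
qed

end
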